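(* Let $P=\frac{1}{\sqrt2}\begin{bmatrix}1&1\\0&0\end{bmatrix}$, $Q=\frac{1}{\sqrt2}\begin{bmatrix}0&0\\1&-1\end{bmatrix}$, $R=\sqrt2\,PQ=\frac{1}{\sqrt2}\begin{bmatrix}1&-1\\0&0\end{bmatrix}$, $S=\sqrt2\,QP=\frac{1}{\sqrt2}\begin{bmatrix}0&0\\1&1\end{bmatrix}$. For integers $l,m\ge0$ with $l+m=n\ge1$, let $\Xi(l,m)$ denote the sum of all distinct products $A_1A_2\cdots A_n$ with each $A_j\in\{P,Q\}$, exactly $l$ of them equal to $P$ and exactly $m$ equal to $Q$ (so $\binom{n}{l}$ terms). Then: (i) if $\min\{l,m\}\ge1$, $$\Xi(l,m)=\Big(\tfrac{1}{\sqrt2}\Big)^{n-1}(-1)^m\sum_{\gamma=1}^{\min\{l,m\}}(-1)^\gamma\binom{l-1}{\gamma-1}\binom{m-1}{\gamma-1}\Big[\tfrac{l-\gamma}{\gamma}P-\tfrac{m-\gamma}{\gamma}Q+R+S\Big];$$ (ii) if $l=n\ge1$ and $m=0$, $\Xi(l,0)=\big(\tfrac{1}{\sqrt2}\big)^{l-1}P$; (iii) if $l=0$ and $m=n\ge1$, $\Xi(0,m)=\big(\tfrac{1}{\sqrt2}\big)^{m-1}(-1)^{m+1}Q$.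
   Context: $P$ and $Q$ are the two parts of the Hadamard matrix $H=\frac{1}{\sqrt2}\begin{bmatrix}1&1\\1&-1\end{bmatrix}=P+Q$ governing the one-dimensional Hadamard walk, and $\Xi(l,m)$ is the coefficient of the word-sum appearing in the expansion of $H^n=(P+Q)^n$ (a "quantum Pascal's triangle"). *)

theory Defs
  imports "HOL-Analysis.Analysis"
begin

definition matP :: "real^2^2" where
  "matP = (1 / sqrt 2) *\<^sub>R vector [vector [1, 1], vector [0, 0]]"

definition matQ :: "real^2^2" where
  "matQ = (1 / sqrt 2) *\<^sub>R vector [vector [0, 0], vector [1, -1]]"

definition matR :: "real^2^2" where
  "matR = sqrt 2 *\<^sub>R (matP ** matQ)"

definition matS :: "real^2^2" where
  "matS = sqrt 2 *\<^sub>R (matQ ** matP)"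

definition word_prod :: "bool list \<Rightarrow> real^2^2" where
  "word_prod w = foldr (\<lambda>b A. (if b then matP else matQ) ** A) w (mat 1)"

definition Xi :: "nat \<Rightarrow> nat \<Rightarrow> real^2^2" where
  "Xi l m = (\<Sum>w\<in>{w. length w = l + m \<and> length (filter id w) = l}. word_prod w)"

end

theory Submission
  imports Defs
begin

definition P0 :: "real^2^2" where "P0 = vector [vector [1, 1], vector [0, 0]]"
definition Q0 :: "real^2^2" where "Q0 = vector [vector [0, 0], vector [1, -1]]"
definition R0 :: "real^2^2" where "R0 = P0 ** Q0"
definition S0 :: "real^2^2" where "S0 = Q0 ** P0"

lemma m22_eq: "(A::real^2^2) = B \<longleftrightarrow> A$1$1 = B$1$1 \<and> A$1$2 = B$1$2 \<and> A$2$1 = B$2$1 \<and> A$2$2 = B$2$2"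
  by (auto simp: vec_eq_iff forall_2)

lemma mm_comp: "((A::real^2^2) ** B)$i$j = A$i$1 * B$1$j + A$i$2 * B$2$j"
  by (simp add: matrix_matrix_mult_def sum_2)

lemmas ents = P0_def Q0_def R0_def S0_def mm_comp

lemma PP: "P0 ** P0 = P0" by (simp add: m22_eq ents)
lemma PR: "P0 ** R0 = R0" by (simp add: m22_eq ents)
lemma PS: "P0 ** S0 = P0" by (simp add: m22_eq ents)
lemma QQ: "Q0 ** Q0 = - Q0" by (simp add: m22_eq ents)
lemma QR: "Q0 ** R0 = Q0" by (simp add: m22_eq ents)
lemma QS: "Q0 ** S0 = - S0" by (simp add: m22_eq ents)

lemma s2: "sqrt 2 * (1 / sqrt 2) * (1 / sqrt 2) = (1 / sqrt 2 :: real)"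
  by (simp add: field_simps)

lemma s3: "sqrt 2 = 2 / (sqrt 2 :: real)"
  by (simp add: field_simps)

lemma matP': "matP = (1/sqrt 2) *\<^sub>R P0" by (simp add: matP_def P0_def)
lemma matQ': "matQ = (1/sqrt 2) *\<^sub>R Q0" by (simp add: matQ_def Q0_def)
lemma matR': "matR = (1/sqrt 2) *\<^sub>R R0"
  by (simp add: matR_def matP' matQ' R0_def matrix_scalar_ac scalar_matrix_assoc[symmetric] s2 s3[symmetric])
lemma matS': "matS = (1/sqrt 2) *\<^sub>R S0"
  by (simp add: matS_def matP' matQ' S0_def matrix_scalar_ac scalar_matrix_assoc[symmetric] s2 s3[symmetric])

definition W0 :: "bool list \<Rightarrow> real^2^2" where
  "W0 w = foldr (\<lambda>b A. (if b then P0 else Q0) ** A) w (mat 1)"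

lemma W0_simps[simp]: "W0 [] = mat 1" "W0 (True # w) = P0 ** W0 w" "W0 (False # w) = Q0 ** W0 w"
  by (simp_all add: W0_def)

lemma word_prod_W0: "word_prod w = (1/sqrt 2) ^ length w *\<^sub>R W0 w"
proof (induction w)
  case Nil
  then show ?case by (simp add: word_prod_def W0_def)
next
  case (Cons b w)
  have "word_prod (b # w) = (if b then matP else matQ) ** word_prod w"
    by (simp add: word_prod_def)
  also have "\<dots> = (1/sqrt 2) ^ length (b # w) *\<^sub>R W0 (b # w)"
    using Cons by (cases b) (simp_all add: matP' matQ' matrix_scalar_ac scalar_matrix_assoc[symmetric])
  finally show ?case .
qed

definition T :: "nat \<Rightarrow> nat \<Rightarrow> bool list set" where
  "T n l = {w. length w = n \<and> length (filter id w) = l}"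

lemma T_finite: "finite (T n l)"
proof -
  have "T n l \<subseteq> {w. set w \<subseteq> UNIV \<and> length w = n}" by (auto simp: T_def)
  moreover have "finite {w. set w \<subseteq> (UNIV::bool set) \<and> length w = n}"
    by (rule finite_lists_length_eq) simp
  ultimately show ?thesis by (rule finite_subset)
qed

lemma T_0: "T 0 l = (if l = 0 then {[]} else {})"
  by (auto simp: T_def)

lemma T_Suc_Suc: "T (Suc n) (Suc l) = Cons True ` T n l \<union> Cons False ` T n (Suc l)"
  apply (auto simp: T_def)
  subgoal for w by (cases w; cases "hd w") (auto simp: image_iff)
  done

lemma T_Suc_0: "T (Suc n) 0 = Cons False ` T n 0"
  apply (auto simp: T_def)
  subgoal for w by (cases w; cases "hd w") (auto simp: image_iff)
  done

lemma sum_mult_left: "finite A \<Longrightarrow> (\<Sum>x\<in>A. (M::real^2^2) ** f x) = M ** (\<Sum>x\<in>A. f x)"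
  by (induction A rule: finite_induct) (simp_all add: matrix_add_ldistrib)

definition G :: "nat \<Rightarrow> nat \<Rightarrow> real^2^2" where
  "G n l = (\<Sum>w\<in>T n l. W0 w)"

lemma G_0: "G 0 l = (if l = 0 then mat 1 else 0)"
  by (simp add: G_def T_0)

lemma G_Suc_0: "G (Suc n) 0 = Q0 ** G n 0"
  by (simp add: G_def T_Suc_0 sum.reindex sum_mult_left T_finite)

lemma G_Suc_Suc: "G (Suc n) (Suc l) = P0 ** G n l + Q0 ** G n (Suc l)"
  unfolding G_def T_Suc_Suc
  by (subst sum.union_disjoint) (auto simp: sum.reindex sum_mult_left T_finite)

lemma G_big: "n < l \<Longrightarrow> G n l = 0"
  unfolding G_def T_def by (rule sum.neutral) (metis (mono_tags) length_filter_le mem_Collect_eq not_le)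

lemma Xi_G: "Xi l m = (1/sqrt 2) ^ (l+m) *\<^sub>R G (l+m) l"
  unfolding Xi_def G_def T_def by (simp add: word_prod_W0 scaleR_sum_right)

definition ca :: "nat \<Rightarrow> nat \<Rightarrow> nat \<Rightarrow> real" where
  "ca N L M = (\<Sum>k<N. (-1) ^ (M + k) * real (L choose Suc k) * real (M choose k))"
definition cb :: "nat \<Rightarrow> nat \<Rightarrow> nat \<Rightarrow> real" where
  "cb N L M = (\<Sum>k<N. (-1) ^ (M + k + 1) * real (L choose k) * real (M choose Suc k))"
definition cc :: "nat \<Rightarrow> nat \<Rightarrow> nat \<Rightarrow> real" where
  "cc N L M = (\<Sum>k<N. (-1) ^ (M + k) * real (L choose k) * real (M choose k))"

lemma sum_indep:
  fixes K N N' :: nat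
  assumes "\<And>k. k \<ge> K \<Longrightarrow> f k = (0::real)" "N \<ge> K" "N' \<ge> K"
  shows "(\<Sum>k<N. f k) = (\<Sum>k<N'. f k)"
proof -
  have "(\<Sum>k<N. f k) = (\<Sum>k<K. f k)" if "N \<ge> K" for N
  proof (rule sum.mono_neutral_right)
    show "{..<K} \<subseteq> {..<N}" using that by (simp add: lessThan_subset_iff)
    show "\<forall>i\<in>{..<N} - {..<K}. f i = 0" using assms(1) by auto
  qed simp
  then show ?thesis using assms by metis
qed

lemma ca_indep: "N \<ge> min L (Suc M) \<Longrightarrow> N' \<ge> min L (Suc M) \<Longrightarrow> ca N L M = ca N' L M"
  unfolding ca_def by (rule sum_indep[where K="min L (Suc M)"]) auto
lemma cb_indep: "N \<ge> min (Suc L) M \<Longrightarrow> N' \<ge> min (Suc L) M \<Longrightarrow> cb N L M = cb N' L M"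
  unfolding cb_def by (rule sum_indep[where K="min (Suc L) M"]) auto
lemma cc_indep: "N \<ge> Suc (min L M) \<Longrightarrow> N' \<ge> Suc (min L M) \<Longrightarrow> cc N L M = cc N' L M"
  unfolding cc_def by (rule sum_indep[where K="Suc (min L M)"]) auto

lemma ca_0: "ca N 0 M = 0" by (simp add: ca_def)
lemma cb_0: "cb N L 0 = 0" by (simp add: cb_def)
lemma cc_0L: "cc (Suc N) 0 M = (-1) ^ M" unfolding cc_def sum.lessThan_Suc_shift by simp
lemma cc_0M: "cc (Suc N) L 0 = 1" unfolding cc_def sum.lessThan_Suc_shift by simp

lemma idA: "ca N (Suc L) M = ca N L M + cc N L M"
  unfolding ca_def cc_def sum.distrib[symmetric]
  by (rule sum.cong) (simp_all add: distrib_left distrib_right)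

lemma idB: "cb N L (Suc M) = cc N L M - cb N L M"
  unfolding cb_def cc_def sum_subtractf[symmetric]
  by (rule sum.cong) (simp_all add: distrib_left distrib_right)

lemma idC: "cc (Suc N) (Suc L) M = cc (Suc N) L M + cb N L M"
proof -
  have "(\<Sum>k<N. (-1) ^ (M + Suc k) * real (Suc L choose Suc k) * real (M choose Suc k))
      = (\<Sum>k<N. (-1) ^ (M + Suc k) * real (L choose Suc k) * real (M choose Suc k)) + cb N L M"
    unfolding cb_def sum.distrib[symmetric]
    by (rule sum.cong) (simp_all add: algebra_simps)
  moreover have "cc (Suc N) (Suc L) M = (-1) ^ M + (\<Sum>k<N. (-1) ^ (M + Suc k) * real (Suc L choose Suc k) * real (M choose Suc k))"
    unfolding cc_def sum.lessThan_Suc_shift by (simp only: binomial_n_0 add_0_right mult_1_right of_nat_1)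
  moreover have "cc (Suc N) L M = (-1) ^ M + (\<Sum>k<N. (-1) ^ (M + Suc k) * real (L choose Suc k) * real (M choose Suc k))"
    unfolding cc_def sum.lessThan_Suc_shift by (simp only: binomial_n_0 add_0_right mult_1_right of_nat_1)
  ultimately show ?thesis by simp
qed

lemma idD: "cc (Suc N) L (Suc M) = ca N L M - cc (Suc N) L M"
proof -
  have "(\<Sum>k<N. (-1) ^ (Suc M + Suc k) * real (L choose Suc k) * real (Suc M choose Suc k))
      + (\<Sum>k<N. (-1) ^ (M + Suc k) * real (L choose Suc k) * real (M choose Suc k)) = ca N L M"
    unfolding ca_def sum.distrib[symmetric]
    by (rule sum.cong) (simp_all add: distrib_left distrib_right)
  moreover have "cc (Suc N) L (Suc M) = (-1) ^ Suc M + (\<Sum>k<N. (-1) ^ (Suc M + Suc k) * real (L choose Suc k) * real (Suc M choose Suc k))"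
    unfolding cc_def sum.lessThan_Suc_shift by (simp only: binomial_n_0 add_0_right mult_1_right of_nat_1)
  moreover have "cc (Suc N) L M = (-1) ^ M + (\<Sum>k<N. (-1) ^ (M + Suc k) * real (L choose Suc k) * real (M choose Suc k))"
    unfolding cc_def sum.lessThan_Suc_shift by (simp only: binomial_n_0 add_0_right mult_1_right of_nat_1)
  ultimately show ?thesis by simp
qed


definition cA where "cA L M = ca (Suc (min L M)) L M"
definition cB where "cB L M = cb (Suc (min L M)) L M"
definition cC where "cC L M = cc (Suc (min L M)) L M"

lemma coefA: "cA (Suc L) M = cA L M + cC L M"
proof -
  have "ca (Suc (min (Suc L) M)) L M = ca (Suc (min L M)) L M"
    by (rule ca_indep) (simp_all add: min_def)
  moreover have "cc (Suc (min (Suc L) M)) L M = cc (Suc (min L M)) L M"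
    by (rule cc_indep) (simp_all add: min_def)
  ultimately show ?thesis unfolding cA_def cC_def idA by simp
qed

lemma coefB: "cB L (Suc M) = cC L M - cB L M"
proof -
  have "cb (Suc (min L (Suc M))) L M = cb (Suc (min L M)) L M"
    by (rule cb_indep) (simp_all add: min_def)
  moreover have "cc (Suc (min L (Suc M))) L M = cc (Suc (min L M)) L M"
    by (rule cc_indep) (simp_all add: min_def)
  ultimately show ?thesis unfolding cB_def cC_def idB by simp
qed

lemma coefC: "cC (Suc L) M = cB L M + cC L M"
proof -
  have "cb (min (Suc L) M) L M = cb (Suc (min L M)) L M"
    by (rule cb_indep) (simp_all add: min_def)
  moreover have "cc (Suc (min (Suc L) M)) L M = cc (Suc (min L M)) L M"
    by (rule cc_indep) (simp_all add: min_def)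
  ultimately show ?thesis unfolding cB_def cC_def idC by simp
qed

lemma coefD: "cC L (Suc M) = cA L M - cC L M"
proof -
  have "ca (min L (Suc M)) L M = ca (Suc (min L M)) L M"
    by (rule ca_indep) (simp_all add: min_def)
  moreover have "cc (Suc (min L (Suc M))) L M = cc (Suc (min L M)) L M"
    by (rule cc_indep) (simp_all add: min_def)
  ultimately show ?thesis unfolding cA_def cC_def idD by simp
qed

lemma coef0: "cA 0 M = 0" "cB L 0 = 0" "cC 0 M = (-1) ^ M" "cC L 0 = 1"
  by (simp_all add: cA_def cB_def cC_def ca_0 cb_0 cc_0L cc_0M)


definition F :: "nat \<Rightarrow> nat \<Rightarrow> real^2^2" where
  "F l m = (if l = 0 \<and> m = 0 then mat 1 else if m = 0 then P0 else if l = 0 then (-1) ^ (m+1) *\<^sub>R Q0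
     else cA (l-1) (m-1) *\<^sub>R P0 + cB (l-1) (m-1) *\<^sub>R Q0 + cC (l-1) (m-1) *\<^sub>R (R0 + S0))"

lemma mult_scaleR_r: "(A::real^2^2) ** (k *\<^sub>R B) = k *\<^sub>R (A ** B)"
  by (simp add: vec_eq_iff matrix_matrix_mult_def sum_distrib_left mult_ac)

lemma mult_minus_r: "(A::real^2^2) ** (- B) = - (A ** B)"
  by (simp add: vec_eq_iff matrix_matrix_mult_def sum_negf)

lemmas mtab = PP PR PS QQ QR QS R0_def[symmetric] S0_def[symmetric] mult_scaleR_r mult_minus_r matrix_add_ldistrib

lemma F_rec: "F (Suc L) (Suc M) = P0 ** F L (Suc M) + Q0 ** F (Suc L) M"
proof (cases L)
  case 0
  note L0 = 0
  show ?thesis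
  proof (cases M)
    case 0
    then show ?thesis using L0 by (simp add: F_def mtab coef0)
  next
    case (Suc M')
    then show ?thesis using L0
      by (simp add: F_def mtab coef0 coefB coefD algebra_simps)
  qed
next
  case (Suc L')
  note LS = Suc
  show ?thesis
  proof (cases M)
    case 0
    then show ?thesis using LS by (simp add: F_def mtab coef0 coefA coefC algebra_simps)
  next
    case (Suc M')
    have e1: "P0 ** F L (Suc M) = (cA L' M + cC L' M) *\<^sub>R P0 + (cB L' M + cC L' M) *\<^sub>R R0"
      using LS by (simp add: F_def mtab algebra_simps scaleR_add_left)
    have e2: "Q0 ** F (Suc L) M = (cC L M' - cB L M') *\<^sub>R Q0 + (cA L M' - cC L M') *\<^sub>R S0"
      using LS Suc by (simp add: F_def mtab algebra_simps scaleR_diff_left)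
    have e3: "F (Suc L) (Suc M) = cA L M *\<^sub>R P0 + cB L M *\<^sub>R Q0 + cC L M *\<^sub>R R0 + cC L M *\<^sub>R S0"
      by (simp add: F_def scaleR_add_right add.assoc)
    have q: "\<And>a b c d a1 b1 c1 d1. a = a1 \<Longrightarrow> b = b1 \<Longrightarrow> c = c1 \<Longrightarrow> d = d1 \<Longrightarrow>
       a *\<^sub>R P0 + b *\<^sub>R Q0 + c *\<^sub>R R0 + d *\<^sub>R S0 = a1 *\<^sub>R P0 + b1 *\<^sub>R Q0 + c1 *\<^sub>R R0 + d1 *\<^sub>R (S0::real^2^2)"
      by simp
    have "F (Suc L) (Suc M) = (cA L' M + cC L' M) *\<^sub>R P0 + (cC L M' - cB L M') *\<^sub>R Q0
        + (cB L' M + cC L' M) *\<^sub>R R0 + (cA L M' - cC L M') *\<^sub>R S0"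
      unfolding e3 using LS Suc by (intro q) (simp_all add: coefA coefB coefC coefD)
    then show ?thesis unfolding e1 e2 by (simp add: algebra_simps)
  qed
qed


lemma G_F: "l \<le> n \<Longrightarrow> G n l = F l (n - l)"
proof (induction n arbitrary: l)
  case 0
  then show ?case by (simp add: G_0 F_def)
next
  case (Suc n)
  show ?case
  proof (cases l)
    case 0
    have "G (Suc n) l = Q0 ** F 0 n" using 0 Suc.IH[of 0] by (simp add: G_Suc_0)
    also have "\<dots> = F 0 (Suc n)" by (cases n) (simp_all add: F_def mtab)
    finally show ?thesis using 0 by simp
  next
    case (Suc l')
    show ?thesis
    proof (cases "l' = n")
      case True
      have "G (Suc n) l = P0 ** F n 0" using Suc True Suc.IH[of n] by (simp add: G_Suc_Suc G_big)
      also have "\<dots> = F (Suc n) 0" by (cases n) (simp_all add: F_def mtab)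
      finally show ?thesis using True Suc by simp
    next
      case False
      then have lt: "l' < n" using Suc \<open>l \<le> Suc n\<close> by simp
      have "G (Suc n) l = P0 ** F l' (n - l') + Q0 ** F (Suc l') (n - Suc l')"
        using Suc lt Suc.IH[of l'] Suc.IH[of "Suc l'"] by (simp add: G_Suc_Suc)
      also have "\<dots> = F (Suc l') (Suc (n - Suc l'))"
        using F_rec[of l' "n - Suc l'"] lt by (simp add: Suc_diff_Suc)
      finally show ?thesis using Suc lt by (simp add: Suc_diff_Suc)
    qed
  qed
qed

lemma Xi_F: "Xi l m = (1/sqrt 2) ^ (l+m) *\<^sub>R F l m"
  by (simp add: Xi_G G_F)

lemma choose_rel: "real (L choose k) * real (L - k) = real (Suc k) * real (L choose Suc k)"
proof -
  have "(L - k) * (L choose k) = Suc k * (L choose Suc k)"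
    using binomial_absorption[of k L] binomial_absorb_comp[of L k] by simp
  then have "real ((L - k) * (L choose k)) = real (Suc k * (L choose Suc k))" by simp
  then show ?thesis by (simp only: of_nat_mult mult.commute)
qed

lemma sgn2: "(-1::real) ^ (M + M) = 1"
  by (simp add: mult_2[symmetric] power_mult)

lemma aux_div: "real (L choose k) * (real (Suc L - Suc k) / real (Suc k)) = real (L choose Suc k)"
proof -
  have "real (L choose k) * (real (Suc L - Suc k) / real (Suc k)) = (real (L choose k) * real (L - k)) / real (Suc k)"
    by simp
  also have "\<dots> = (real (Suc k) * real (L choose Suc k)) / real (Suc k)" by (simp only: choose_rel)
  also have "\<dots> = real (L choose Suc k)" by (rule nonzero_mult_div_cancel_left) (simp del: of_nat_Suc)
  finally show ?thesis .
qed
lemma aux3: "(u::real) * v = w \<Longrightarrow> w * a * b * s = s * u * (v * a * b)"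
  by (drule sym) (simp add: ac_simps)
lemma aux1: "(u::real) * v = w \<Longrightarrow> a * x = a' \<Longrightarrow> w * a * b * x * s = s * u * (v * a'*b)"
  by (drule sym, drule sym) (simp add: ac_simps)
lemma aux2: "(u::real) * v = w \<Longrightarrow> b * y = b' \<Longrightarrow> -(w * a * b * y * s) = s * u * ((-v) * a * b')"
  by (drule sym, drule sym) (simp add: ac_simps)

lemma term_eq:
  fixes s :: real
  shows "((-1)^(Suc k) * real (L choose k) * real (M choose k)) *\<^sub>R
     ((real (Suc L - Suc k) / real (Suc k)) *\<^sub>R (s *\<^sub>R P0) - (real (Suc M - Suc k) / real (Suc k)) *\<^sub>R (s *\<^sub>R Q0) + s *\<^sub>R R0 + s *\<^sub>R S0)
   = (s * (-1)^Suc M) *\<^sub>R (((-1)^(M+k) * real (L choose Suc k) * real (M choose k)) *\<^sub>R P0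
       + ((-1)^(M+k+1) * real (L choose k) * real (M choose Suc k)) *\<^sub>R Q0
       + ((-1)^(M+k) * real (L choose k) * real (M choose k)) *\<^sub>R (R0 + S0))"
proof -
  have sg: "(-1::real)^(Suc M) * (-1)^(M+k) = (-1)^(Suc k)"
  proof -
    have "Suc M + (M + k) = (M+M) + Suc k" by simp
    then have "(-1::real)^(Suc M + (M + k)) = (-1)^(M+M) * (-1)^(Suc k)" by (simp only: power_add)
    then show ?thesis by (simp only: power_add[symmetric] sgn2 mult_1_left)
  qed
  have lin1: "\<And>c x y (P::real^2^2) Q R S. c *\<^sub>R (x *\<^sub>R (s *\<^sub>R P) - y *\<^sub>R (s *\<^sub>R Q) + s *\<^sub>R R + s *\<^sub>R S)
      = (c * x * s) *\<^sub>R P + (- (c * y * s)) *\<^sub>R Q + (c * s) *\<^sub>R R + (c * s) *\<^sub>R S"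
    by (simp add: algebra_simps)
  have lin2: "\<And>t a b c (P::real^2^2) Q R S. t *\<^sub>R (a *\<^sub>R P + b *\<^sub>R Q + c *\<^sub>R (R + S))
      = (t * a) *\<^sub>R P + (t * b) *\<^sub>R Q + (t * c) *\<^sub>R R + (t * c) *\<^sub>R S"
    by (simp add: algebra_simps)
  have h1: "(-1)^(Suc k) * real (L choose k) * real (M choose k) * (real (Suc L - Suc k) / real (Suc k)) * s
      = s * (-1)^Suc M * ((-1)^(M+k) * real (L choose Suc k) * real (M choose k))"
    by (rule aux1[OF sg aux_div])
  have mneg: "(-1::real)^(M+k+1) = -((-1::real)^(M+k))" by simp
  have h2: "-((-1)^(Suc k) * real (L choose k) * real (M choose k) * (real (Suc M - Suc k) / real (Suc k)) * s)
      = s * (-1)^Suc M * ((-1)^(M+k+1) * real (L choose k) * real (M choose Suc k))"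
    unfolding mneg by (rule aux2[OF sg aux_div])
  have h3: "(-1)^(Suc k) * real (L choose k) * real (M choose k) * s
      = s * (-1)^Suc M * ((-1)^(M+k) * real (L choose k) * real (M choose k))"
    by (rule aux3[OF sg])
  show ?thesis unfolding lin1 lin2 h1 h2 h3 ..
qed


lemma sum_part:
  "(\<Sum>\<gamma> = 1..min (Suc L) (Suc M). ((-1) ^ \<gamma> * real ((Suc L - 1) choose (\<gamma> - 1))
                   * real ((Suc M - 1) choose (\<gamma> - 1))) *\<^sub>R
                ((real (Suc L - \<gamma>) / real \<gamma>) *\<^sub>R matP - (real (Suc M - \<gamma>) / real \<gamma>) *\<^sub>R matQ
                 + matR + matS))
   = ((1/sqrt 2) * (-1)^Suc M) *\<^sub>R (cA L M *\<^sub>R P0 + cB L M *\<^sub>R Q0 + cC L M *\<^sub>R (R0 + S0))"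
proof -
  let ?s = "1/sqrt 2 :: real"
  have "(\<Sum>\<gamma> = 1..min (Suc L) (Suc M). ((-1) ^ \<gamma> * real ((Suc L - 1) choose (\<gamma> - 1))
                   * real ((Suc M - 1) choose (\<gamma> - 1))) *\<^sub>R
                ((real (Suc L - \<gamma>) / real \<gamma>) *\<^sub>R matP - (real (Suc M - \<gamma>) / real \<gamma>) *\<^sub>R matQ
                 + matR + matS))
     = (\<Sum>k<Suc (min L M). ((-1)^(Suc k) * real (L choose k) * real (M choose k)) *\<^sub>R
     ((real (Suc L - Suc k) / real (Suc k)) *\<^sub>R (?s *\<^sub>R P0) - (real (Suc M - Suc k) / real (Suc k)) *\<^sub>R (?s *\<^sub>R Q0) + ?s *\<^sub>R R0 + ?s *\<^sub>R S0))"
    unfolding min_Suc_Suc One_nat_def sum.atLeast1_atMost_eq by (simp only: diff_Suc_Suc diff_zero matP' matQ' matR' matS')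
  also have "\<dots> = (\<Sum>k<Suc (min L M). (?s * (-1)^Suc M) *\<^sub>R (((-1)^(M+k) * real (L choose Suc k) * real (M choose k)) *\<^sub>R P0
       + ((-1)^(M+k+1) * real (L choose k) * real (M choose Suc k)) *\<^sub>R Q0
       + ((-1)^(M+k) * real (L choose k) * real (M choose k)) *\<^sub>R (R0 + S0)))"
    by (rule sum.cong[OF refl]) (rule term_eq)
  also have "\<dots> = (?s * (-1)^Suc M) *\<^sub>R (cA L M *\<^sub>R P0 + cB L M *\<^sub>R Q0 + cC L M *\<^sub>R (R0 + S0))"
    unfolding scaleR_sum_right[symmetric] sum.distrib scaleR_sum_left[symmetric] cA_def cB_def cC_def ca_def cb_def cc_def
    ..
  finally show ?thesis .
qed

theorem theorem3:
  fixes l m :: nat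
  assumes "l + m \<ge> 1"
  shows "(min l m \<ge> 1 \<longrightarrow>
           Xi l m = ((1 / sqrt 2) ^ (l + m - 1) * (-1) ^ m) *\<^sub>R
             (\<Sum>\<gamma> = 1..min l m. ((-1) ^ \<gamma> * real ((l - 1) choose (\<gamma> - 1))
                   * real ((m - 1) choose (\<gamma> - 1))) *\<^sub>R
                ((real (l - \<gamma>) / real \<gamma>) *\<^sub>R matP - (real (m - \<gamma>) / real \<gamma>) *\<^sub>R matQ
                 + matR + matS)))
       \<and> (m = 0 \<longrightarrow> Xi l 0 = (1 / sqrt 2) ^ (l - 1) *\<^sub>R matP)
       \<and> (l = 0 \<longrightarrow> Xi 0 m = ((1 / sqrt 2) ^ (m - 1) * (-1) ^ (m + 1)) *\<^sub>R matQ)"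
proof (intro conjI impI)
  assume a1: "min l m \<ge> 1"
  obtain L where l1: "l = Suc L" using a1 by (cases l) auto
  obtain M where m1: "m = Suc M" using a1 by (cases m) auto
  note lm = l1 m1
  have sg: "(-1::real) ^ Suc M * (-1) ^ Suc M = 1"
    by (simp add: power_mult_distrib[symmetric])
  have ce: "((1 / sqrt 2) ^ (Suc L + Suc M - 1) * (-1) ^ Suc M * ((1/sqrt 2) * (-1)^Suc M) :: real) = (1 / sqrt 2) ^ (Suc L + Suc M)"
  proof -
    have "((1 / sqrt 2) ^ (Suc L + Suc M - 1) * (-1) ^ Suc M * ((1/sqrt 2) * (-1)^Suc M) :: real)
       = ((1 / sqrt 2) ^ (Suc L + Suc M - 1) * (1/sqrt 2)) * ((-1) ^ Suc M * (-1)^Suc M)"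
      by (simp only: ac_simps)
    also have "\<dots> = (1 / sqrt 2) ^ (Suc L + Suc M - 1) * (1 / sqrt 2)" by (simp only: sg mult_1_right)
    also have "\<dots> = (1 / sqrt 2) ^ (Suc L + Suc M)" by simp
    finally show ?thesis .
  qed
  have X: "Xi (Suc L) (Suc M) = (1 / sqrt 2) ^ (Suc L + Suc M) *\<^sub>R (cA L M *\<^sub>R P0 + cB L M *\<^sub>R Q0 + cC L M *\<^sub>R (R0 + S0))"
    unfolding Xi_F by (simp add: F_def)
  show "Xi l m = ((1 / sqrt 2) ^ (l + m - 1) * (-1) ^ m) *\<^sub>R
             (\<Sum>\<gamma> = 1..min l m. ((-1) ^ \<gamma> * real ((l - 1) choose (\<gamma> - 1))
                   * real ((m - 1) choose (\<gamma> - 1))) *\<^sub>R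
                ((real (l - \<gamma>) / real \<gamma>) *\<^sub>R matP - (real (m - \<gamma>) / real \<gamma>) *\<^sub>R matQ
                 + matR + matS))"
    unfolding lm sum_part scaleR_scaleR ce X ..
next
  assume "m = 0"
  then have "l \<ge> 1" using assms by simp
  then obtain L where "l = Suc L" by (cases l) auto
  then show "Xi l 0 = (1 / sqrt 2) ^ (l - 1) *\<^sub>R matP"
    by (simp add: Xi_F F_def matP')
next
  assume "l = 0"
  then have "m \<ge> 1" using assms by simp
  then obtain M where "m = Suc M" by (cases m) auto
  then show "Xi 0 m = ((1 / sqrt 2) ^ (m - 1) * (-1) ^ (m + 1)) *\<^sub>R matQ"
    by (simp add: Xi_F F_def matQ')
qed

end
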